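(* Let $f(x)=|x|$ on $[-1,1]$. For each integer $n\geq 0$ let $p_n^{L_1}$ be the best $L_1$ polynomial approximant of degree $\leq n$ to $f$ and $p_n^{L_\infty}$ the best $L_\infty$ (minimax) polynomial approximant of degree $\leq n$ to $f$, and let \[ \Omega_n=\Big\{x\in[-1,1]:|f(x)-p_n^{L_1}(x)|\geq\tfrac12\|f-p_n^{L_\infty}\|_\infty\Big\}. \] Then $|\Omega_n|=\mathcal{O}(n^{-1})$ as $n\to\infty$, where $|\cdot|$ denotes Lebesgue measure.
   Context: $p_n^{L_1}$ minimizes $\int_{-1}^1|f(x)-q(x)|\,dx$ and $p_n^{L_\infty}$ minimizes $\max_{x\in[-1,1]}|f(x)-q(x)|$ over real polynomials $q$ of degree $\leq n$; $\|g\|_\infty=\max_{x\in[-1,1]}|g(x)|$. *)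

theory Defs
  imports "HOL-Analysis.Analysis" "HOL-Computational_Algebra.Polynomial" "HOL-Library.Landau_Symbols"
begin

definition L1_err :: "(real \<Rightarrow> real) \<Rightarrow> real poly \<Rightarrow> real" where
  "L1_err f q = integral {-1..1} (\<lambda>x. \<bar>f x - poly q x\<bar>)"

definition sup_err :: "(real \<Rightarrow> real) \<Rightarrow> real poly \<Rightarrow> real" where
  "sup_err f q = (SUP x\<in>{-1..1}. \<bar>f x - poly q x\<bar>)"

definition is_best_L1 :: "(real \<Rightarrow> real) \<Rightarrow> nat \<Rightarrow> real poly \<Rightarrow> bool" where
  "is_best_L1 f n p \<longleftrightarrow> degree p \<le> n \<and> (\<forall>q. degree q \<le> n \<longrightarrow> L1_err f p \<le> L1_err f q)"

definition is_best_Linf :: "(real \<Rightarrow> real) \<Rightarrow> nat \<Rightarrow> real poly \<Rightarrow> bool" where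
  "is_best_Linf f n p \<longleftrightarrow> degree p \<le> n \<and> (\<forall>q. degree q \<le> n \<longrightarrow> sup_err f p \<le> sup_err f q)"

end

theory Submission
  imports Defs
begin


lemma ftc_real:
  fixes F f :: "real \<Rightarrow> real"
  assumes "a \<le> b" "\<And>x. x \<in> {a..b} \<Longrightarrow> (F has_real_derivative f x) (at x)"
  shows "(f has_integral (F b - F a)) {a..b}"
  by (rule fundamental_theorem_of_calculus)
     (use assms in \<open>auto simp: has_real_derivative_iff_has_vector_derivative[symmetric] intro: has_field_derivative_at_within\<close>)

lemma cos_int_has_integral:
  fixes z :: int
  shows "((\<lambda>t. cos (of_int z * t)) has_integral (if z = 0 then pi else 0)) {0..pi}"
proof (cases "z = 0")
  case True then show ?thesis using has_integral_const_real[of "1::real" 0 pi] by (simp add: real_scaleR_def)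
next
  case False
  have "((\<lambda>t. cos (of_int z * t)) has_integral
      ((\<lambda>t. sin (of_int z * t) / of_int z) pi - (\<lambda>t. sin (of_int z * t) / of_int z) 0)) {0..pi}"
    by (rule ftc_real) (use False in \<open>auto intro!: derivative_eq_intros\<close>)
  moreover have "sin (of_int z * pi) = 0" by (simp add: sin_times_pi_eq_0)
  ultimately show ?thesis using False by simp
qed

lemma cos_nat_has_integral:
  "m \<ge> 1 \<Longrightarrow> ((\<lambda>t. cos (real m * t)) has_integral 0) {0..pi}"
  using cos_int_has_integral[of "int m"] by simp

lemma cos_prod_shift:
  assumes "m \<ge> 1"
  shows "cos t * cos (real m * t) = (cos (real (m-1) * t) + cos (real (m+1) * t)) / 2"
proof -
  have "cos t * cos (real m * t) = (cos (t - real m * t) + cos (t + real m * t)) / 2"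
    by (rule cos_times_cos)
  moreover have "cos (t - real m * t) = cos (real (m-1) * t)"
  proof -
    have "t - real m * t = - (real (m-1) * t)" using assms by (simp add: of_nat_diff algebra_simps)
    then show ?thesis by simp
  qed
  moreover have "t + real m * t = real (m+1) * t" by (simp add: algebra_simps)
  ultimately show ?thesis by simp
qed

lemma cospow_orth:
  "l < m \<Longrightarrow> ((\<lambda>t. cos t ^ l * cos (real m * t)) has_integral 0) {0..pi}"
proof (induction l arbitrary: m)
  case 0 then show ?case using cos_nat_has_integral[of m] by simp
next
  case (Suc l)
  have m1: "m \<ge> 1" using Suc.prems by simp
  have eq: "cos t ^ Suc l * cos (real m * t) =
     (1/2) * (cos t ^ l * cos (real (m-1) * t)) + (1/2) * (cos t ^ l * cos (real (m+1) * t))" for t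
  proof -
    have "cos t ^ Suc l * cos (real m * t) = cos t ^ l * (cos t * cos (real m * t))" by (simp add: mult.assoc)
    also have "\<dots> = cos t ^ l * ((cos (real (m-1) * t) + cos (real (m+1) * t)) / 2)"
      by (simp only: cos_prod_shift[OF m1])
    finally show ?thesis by (simp add: field_simps)
  qed
  have "((\<lambda>t. (1/2) * (cos t ^ l * cos (real (m-1) * t)) + (1/2) * (cos t ^ l * cos (real (m+1) * t)))
         has_integral ((1/2) * 0 + (1/2) * 0)) {0..pi}"
    by (intro has_integral_add has_integral_mult_right Suc.IH) (use Suc.prems in auto)
  then have "((\<lambda>t. (1/2) * (cos t ^ l * cos (real (m-1) * t)) + (1/2) * (cos t ^ l * cos (real (m+1) * t)))
         has_integral 0) {0..pi}" by simp
  then show ?case by (simp only: eq)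
qed

lemma poly_orth:
  fixes q :: "real poly"
  assumes "degree q < m"
  shows "((\<lambda>t. poly q (cos t) * cos (real m * t)) has_integral 0) {0..pi}"
proof -
  have eq: "poly q (cos t) * cos (real m * t) = (\<Sum>i\<le>degree q. coeff q i * (cos t ^ i * cos (real m * t)))" for t
    by (simp add: poly_altdef sum_distrib_left ac_simps)
  have "((\<lambda>t. \<Sum>i\<le>degree q. coeff q i * (cos t ^ i * cos (real m * t))) has_integral
          (\<Sum>i\<le>degree q. coeff q i * 0)) {0..pi}"
    by (intro has_integral_sum has_integral_mult_right cospow_orth) (use assms in auto)
  then show ?thesis by (simp add: eq)
qed


lemma sin_half_odd: "sin ((2 * real m + 1) * pi / 2) = (-1)^m"
proof -
  have e: "(2 * real m + 1) * pi / 2 = real m * pi + pi/2" by (simp add: field_simps)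
  have "sin (real m * pi + pi/2) = (-1)^m" by (simp add: sin_add)
  then show ?thesis by (simp only: e)
qed

lemma sin_half_odd2: "sin ((2 * real m - 1) * pi / 2) = -((-1)^m)"
proof -
  have e: "(2 * real m - 1) * pi / 2 = real m * pi - pi/2" by (simp add: field_simps)
  have "sin (real m * pi - pi/2) = -((-1)^m)" by (simp add: sin_diff)
  then show ?thesis by (simp only: e)
qed

lemma sin_odd_pi: "sin ((2 * real m + 1) * pi) = 0" "sin ((2 * real m - 1) * pi) = 0"
proof -
  have "(2 * real m + 1) = of_int (2 * int m + 1)" by simp
  then show "sin ((2 * real m + 1) * pi) = 0" by (metis sin_times_pi_eq_0 Ints_of_int)
  have "(2 * real m - 1) = of_int (2 * int m - 1)" by simp
  then show "sin ((2 * real m - 1) * pi) = 0" by (metis sin_times_pi_eq_0 Ints_of_int)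
qed

definition Acoef :: "nat \<Rightarrow> real" where "Acoef m = 2 * (-1)^(m+1) / (4 * real m ^ 2 - 1)"
definition Bcoef :: "nat \<Rightarrow> real" where "Bcoef m = 2 / (4 * real m ^ 2 - 1)"

lemma abs_cos_int: "((\<lambda>t. \<bar>cos t\<bar> * cos (real (2*m) * t)) has_integral Acoef m) {0..pi}"
proof -
  define a where "a = 2 * real m + 1"
  define b where "b = 2 * real m - 1"
  have a0: "a \<noteq> 0" unfolding a_def by (simp add: add_nonneg_eq_0_iff)
  have b0: "b \<noteq> 0"
  proof
    assume "b = 0"
    then have "2 * real m = 1" unfolding b_def by simp
    then have "2 * m = 1" by linarith
    then show False by presburger
  qed
  define F where "F t = (sin (a*t)/a + sin (b*t)/b)/2" for t
  have idc: "cos t * cos (real (2*m) * t) = (cos (a*t) + cos (b*t))/2" for t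
  proof -
    have "cos t * cos (real (2*m) * t) = (cos (t - real (2*m) * t) + cos (t + real (2*m) * t))/2"
      by (rule cos_times_cos)
    moreover have "t - real (2*m) * t = - (b*t)" unfolding b_def by (simp add: algebra_simps)
    moreover have "t + real (2*m) * t = a*t" unfolding a_def by (simp add: algebra_simps)
    ultimately show ?thesis by simp
  qed
  have dF: "(F has_real_derivative (cos t * cos (real (2*m) * t))) (at t)" for t
    unfolding F_def idc using a0 b0
    by (auto intro!: derivative_eq_intros simp: field_simps)
  have I1: "((\<lambda>t. cos t * cos (real (2*m) * t)) has_integral (F (pi/2) - F 0)) {0..pi/2}"
    by (rule ftc_real[OF _ dF]) simp
  have I1': "((\<lambda>t. \<bar>cos t\<bar> * cos (real (2*m) * t)) has_integral (F (pi/2) - F 0)) {0..pi/2}"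
  proof (rule has_integral_cong[THEN iffD1, OF _ I1])
    fix t assume "t \<in> {0..pi/2}"
    then have "cos t \<ge> 0" by (intro cos_ge_zero) auto
    then show "cos t * cos (real (2*m) * t) = \<bar>cos t\<bar> * cos (real (2*m) * t)" by simp
  qed
  have I2: "((\<lambda>t. cos t * cos (real (2*m) * t)) has_integral (F pi - F (pi/2))) {pi/2..pi}"
    by (rule ftc_real[OF _ dF]) simp
  then have I2n: "((\<lambda>t. - (cos t * cos (real (2*m) * t))) has_integral - (F pi - F (pi/2))) {pi/2..pi}"
    by (rule has_integral_neg)
  have I2': "((\<lambda>t. \<bar>cos t\<bar> * cos (real (2*m) * t)) has_integral - (F pi - F (pi/2))) {pi/2..pi}"
  proof (rule has_integral_cong[THEN iffD1, OF _ I2n])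
    fix t assume "t \<in> {pi/2..pi}"
    then have "cos (pi - t) \<ge> 0" by (intro cos_ge_zero) auto
    then have "cos t \<le> 0" by simp
    then show "- (cos t * cos (real (2*m) * t)) = \<bar>cos t\<bar> * cos (real (2*m) * t)" by simp
  qed
  have comb: "((\<lambda>t. \<bar>cos t\<bar> * cos (real (2*m) * t)) has_integral ((F (pi/2) - F 0) + - (F pi - F (pi/2)))) {0..pi}"
    by (rule has_integral_combine[OF _ _ I1' I2']) auto
  have F0: "F 0 = 0" unfolding F_def by simp
  have Fpi: "F pi = 0" unfolding F_def a_def b_def using sin_odd_pi[of m] by simp
  have Fh: "F (pi/2) = ((-1)^m / a - (-1)^m / b) / 2"
  proof -
    have "sin (a * (pi/2)) = (-1)^m" unfolding a_def using sin_half_odd[of m] by (simp add: mult.commute)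
    moreover have "sin (b * (pi/2)) = -((-1)^m)" unfolding b_def using sin_half_odd2[of m] by (simp add: mult.commute)
    ultimately show ?thesis unfolding F_def by simp
  qed
  have ab: "a * b = 4 * real m ^ 2 - 1" unfolding a_def b_def by (simp add: algebra_simps power2_eq_square)
  have "(F (pi/2) - F 0) + - (F pi - F (pi/2)) = (-1)^m * (1/a - 1/b)"
    using F0 Fpi Fh by (simp add: field_simps)
  also have "\<dots> = (-1)^m * ((b - a) / (a*b))" using a0 b0 by (simp add: field_simps)
  also have "\<dots> = Acoef m" unfolding Acoef_def ab[symmetric] by (simp add: a_def b_def)
  finally show ?thesis using comb by simp
qed

lemma sup_err_ge:
  fixes q :: "real poly"
  assumes "x \<in> {-1..1}"
  shows "\<bar>abs x - poly q x\<bar> \<le> sup_err abs q"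
  unfolding sup_err_def
proof (rule cSUP_upper[OF assms])
  have "continuous_on {-1..1} (\<lambda>x. \<bar>abs x - poly q x\<bar>)"
    by (intro continuous_intros)
  then have "compact ((\<lambda>x. \<bar>abs x - poly q x\<bar>) ` {-1..1::real})"
    by (intro compact_continuous_image) auto
  then show "bdd_above ((\<lambda>x. \<bar>abs x - poly q x\<bar>) ` {-1..1})"
    by (intro bounded_imp_bdd_above compact_imp_bounded)
qed


definition Gk :: "nat \<Rightarrow> real \<Rightarrow> real" where
  "Gk k t = (\<Sum>j\<le>k. (-1)^j * cos (real (2*j) * t))"

definition Kr :: "nat \<Rightarrow> nat \<Rightarrow> real \<Rightarrow> real" where
  "Kr M k t = cos (real (2*M) * t) * (Gk k t)^2"

lemma cos3: "cos a * cos b * cos (c::real) = (cos (a+b+c) + cos (a+b-c) + cos (a-b+c) + cos (a-b-c)) / 4"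
proof -
  have "cos a * cos b * cos c = (cos (a-b) * cos c + cos (a+b) * cos c) / 2"
    by (simp add: cos_times_cos field_simps)
  also have "\<dots> = ((cos (a-b-c) + cos (a-b+c))/2 + (cos (a+b-c) + cos (a+b+c))/2) / 2"
    by (simp only: cos_times_cos)
  finally show ?thesis by (simp add: field_simps)
qed

definition Kterm :: "nat \<Rightarrow> nat \<Rightarrow> nat \<Rightarrow> real \<Rightarrow> real" where
  "Kterm M i j t = cos (real (2*(M+i+j)) * t) + cos (real (2*(M+i-j)) * t)
     + cos (real (2*(M-i+j)) * t) + cos (real (2*(M-i-j)) * t)"

lemma Kr_expand:
  assumes "2*k < M"
  shows "Kr M k t = (\<Sum>i\<le>k. \<Sum>j\<le>k. (-1)^(i+j) / 4 * Kterm M i j t)"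
proof -
  have "Kr M k t = cos (real (2*M) * t) *
     (\<Sum>i\<le>k. \<Sum>j\<le>k. ((-1)^i * cos (real (2*i) * t)) * ((-1)^j * cos (real (2*j) * t)))"
    unfolding Kr_def Gk_def power2_eq_square sum_product ..
  also have "\<dots> = (\<Sum>i\<le>k. \<Sum>j\<le>k. cos (real (2*M) * t) * (((-1)^i * cos (real (2*i) * t)) * ((-1)^j * cos (real (2*j) * t))))"
    by (simp add: sum_distrib_left)
  also have "\<dots> = (\<Sum>i\<le>k. \<Sum>j\<le>k. (-1)^(i+j) / 4 * Kterm M i j t)"
  proof (intro sum.cong refl)
    fix i j assume i: "i \<in> {..k}" and j: "j \<in> {..k}"
    then have ij: "i + j \<le> M" using assms by auto
    have "cos (real (2*M) * t) * (((-1)^i * cos (real (2*i) * t)) * ((-1)^j * cos (real (2*j) * t)))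
        = (-1)^(i+j) * (cos (real (2*M) * t) * cos (real (2*i) * t) * cos (real (2*j) * t))"
      by (simp add: power_add)
    also have "\<dots> = (-1)^(i+j) / 4 * Kterm M i j t"
      unfolding cos3 Kterm_def using ij
      by (simp add: of_nat_diff algebra_simps)
    finally show "cos (real (2*M) * t) * (((-1)^i * cos (real (2*i) * t)) * ((-1)^j * cos (real (2*j) * t)))
        = (-1)^(i+j) / 4 * Kterm M i j t" .
  qed
  finally show ?thesis .
qed

lemma Kr_poly_orth:
  fixes q :: "real poly"
  assumes "2*k < M" "degree q < 2*(M - 2*k)"
  shows "((\<lambda>t. poly q (cos t) * Kr M k t) has_integral 0) {0..pi}"
proof -
  have eq: "poly q (cos t) * Kr M k t = (\<Sum>i\<le>k. \<Sum>j\<le>k. (-1)^(i+j) / 4 *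
     (poly q (cos t) * cos (real (2*(M+i+j)) * t) + poly q (cos t) * cos (real (2*(M+i-j)) * t)
     + poly q (cos t) * cos (real (2*(M-i+j)) * t) + poly q (cos t) * cos (real (2*(M-i-j)) * t)))" for t
    unfolding Kr_expand[OF assms(1)] Kterm_def by (simp add: sum_distrib_left algebra_simps)
  have "((\<lambda>t. \<Sum>i\<le>k. \<Sum>j\<le>k. (-1)^(i+j) / 4 *
     (poly q (cos t) * cos (real (2*(M+i+j)) * t) + poly q (cos t) * cos (real (2*(M+i-j)) * t)
     + poly q (cos t) * cos (real (2*(M-i+j)) * t) + poly q (cos t) * cos (real (2*(M-i-j)) * t)))
     has_integral (\<Sum>i\<le>k. \<Sum>j\<le>k. (-1)^(i+j) / 4 * (0 + 0 + 0 + 0))) {0..pi}"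
    by (intro has_integral_sum has_integral_mult_right has_integral_add poly_orth finite_atMost)
       (use assms in auto)
  then have "((\<lambda>t. \<Sum>i\<le>k. \<Sum>j\<le>k. (-1)^(i+j) / 4 *
     (poly q (cos t) * cos (real (2*(M+i+j)) * t) + poly q (cos t) * cos (real (2*(M+i-j)) * t)
     + poly q (cos t) * cos (real (2*(M-i+j)) * t) + poly q (cos t) * cos (real (2*(M-i-j)) * t)))
     has_integral 0) {0..pi}" by simp
  then show ?thesis by (simp only: eq)
qed

lemma Kr_abs_int:
  assumes "2*k < M"
  shows "((\<lambda>t. \<bar>cos t\<bar> * Kr M k t) has_integral
     (\<Sum>i\<le>k. \<Sum>j\<le>k. (-1)^(i+j) / 4 *
       (Acoef (M+i+j) + Acoef (M+i-j) + Acoef (M-i+j) + Acoef (M-i-j)))) {0..pi}"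
proof -
  have eq: "\<bar>cos t\<bar> * Kr M k t = (\<Sum>i\<le>k. \<Sum>j\<le>k. (-1)^(i+j) / 4 *
     (\<bar>cos t\<bar> * cos (real (2*(M+i+j)) * t) + \<bar>cos t\<bar> * cos (real (2*(M+i-j)) * t)
     + \<bar>cos t\<bar> * cos (real (2*(M-i+j)) * t) + \<bar>cos t\<bar> * cos (real (2*(M-i-j)) * t)))" for t
    unfolding Kr_expand[OF assms(1)] Kterm_def by (simp add: sum_distrib_left algebra_simps)
  have "((\<lambda>t. \<Sum>i\<le>k. \<Sum>j\<le>k. (-1)^(i+j) / 4 *
     (\<bar>cos t\<bar> * cos (real (2*(M+i+j)) * t) + \<bar>cos t\<bar> * cos (real (2*(M+i-j)) * t)
     + \<bar>cos t\<bar> * cos (real (2*(M-i+j)) * t) + \<bar>cos t\<bar> * cos (real (2*(M-i-j)) * t)))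
     has_integral (\<Sum>i\<le>k. \<Sum>j\<le>k. (-1)^(i+j) / 4 *
       (Acoef (M+i+j) + Acoef (M+i-j) + Acoef (M-i+j) + Acoef (M-i-j)))) {0..pi}"
    by (intro has_integral_sum has_integral_mult_right has_integral_add abs_cos_int finite_atMost)
  then show ?thesis by (simp only: eq)
qed

lemma G2_int: "((\<lambda>t. (Gk k t)^2) has_integral ((real k + 2) * pi / 2)) {0..pi}"
proof -
  have eq: "(Gk k t)^2 = (\<Sum>i\<le>k. \<Sum>j\<le>k. (-1)^(i+j) / 2 *
      (cos (of_int (2 * int i - 2 * int j) * t) + cos (of_int (2 * int i + 2 * int j) * t)))" for t
  proof -
    have "(Gk k t)^2 = (\<Sum>i\<le>k. \<Sum>j\<le>k. ((-1)^i * cos (real (2*i) * t)) * ((-1)^j * cos (real (2*j) * t)))"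
      unfolding Gk_def power2_eq_square sum_product ..
    also have "\<dots> = (\<Sum>i\<le>k. \<Sum>j\<le>k. (-1)^(i+j) / 2 *
      (cos (of_int (2 * int i - 2 * int j) * t) + cos (of_int (2 * int i + 2 * int j) * t)))"
    proof (intro sum.cong refl)
      fix i j
      have "((-1)^i * cos (real (2*i) * t)) * ((-1)^j * cos (real (2*j) * t))
         = (-1)^(i+j) * (cos (real (2*i) * t) * cos (real (2*j) * t))" by (simp add: power_add)
      also have "\<dots> = (-1)^(i+j) / 2 *
      (cos (of_int (2 * int i - 2 * int j) * t) + cos (of_int (2 * int i + 2 * int j) * t))"
        unfolding cos_times_cos by (simp add: algebra_simps)
      finally show "((-1)^i * cos (real (2*i) * t)) * ((-1)^j * cos (real (2*j) * t)) = (-1)^(i+j) / 2 *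
      (cos (of_int (2 * int i - 2 * int j) * t) + cos (of_int (2 * int i + 2 * int j) * t))" .
    qed
    finally show ?thesis .
  qed
  have "((\<lambda>t. \<Sum>i\<le>k. \<Sum>j\<le>k. (-1)^(i+j) / 2 *
      (cos (of_int (2 * int i - 2 * int j) * t) + cos (of_int (2 * int i + 2 * int j) * t)))
     has_integral (\<Sum>i\<le>k. \<Sum>j\<le>k. (-1)^(i+j) / 2 *
      ((if 2 * int i - 2 * int j = 0 then pi else 0) + (if 2 * int i + 2 * int j = 0 then pi else 0)))) {0..pi}"
    by (intro has_integral_sum has_integral_mult_right has_integral_add cos_int_has_integral finite_atMost)
  moreover have "(\<Sum>i\<le>k. \<Sum>j\<le>k. (-1::real)^(i+j) / 2 *
      ((if 2 * int i - 2 * int j = 0 then pi else 0) + (if 2 * int i + 2 * int j = 0 then pi else 0)))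
     = (real k + 2) * pi / 2"
  proof -
    have inner: "(\<Sum>j\<le>k. (-1::real)^(i+j) / 2 *
      ((if 2 * int i - 2 * int j = 0 then pi else 0) + (if 2 * int i + 2 * int j = 0 then pi else 0)))
      = pi/2 + (if i = 0 then pi/2 else 0)" if "i \<le> k" for i
    proof -
      have "(\<Sum>j\<le>k. (-1::real)^(i+j) / 2 *
      ((if 2 * int i - 2 * int j = 0 then pi else 0) + (if 2 * int i + 2 * int j = 0 then pi else 0)))
       = (\<Sum>j\<le>k. (if j = i then pi/2 else 0) + (if j = 0 \<and> i = 0 then pi/2 else 0))"
      proof (intro sum.cong refl)
        fix j
        show "(-1::real)^(i+j) / 2 *
          ((if 2 * int i - 2 * int j = 0 then pi else 0) + (if 2 * int i + 2 * int j = 0 then pi else 0))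
          = (if j = i then pi/2 else 0) + (if j = 0 \<and> i = 0 then pi/2 else 0)"
          by (cases "j = i") (auto simp flip: mult_2 simp: power_add power_mult_distrib[symmetric])
      qed
      also have "\<dots> = pi/2 + (if i = 0 then pi/2 else 0)"
        using that by (simp add: sum.distrib)
      finally show ?thesis .
    qed
    have "(\<Sum>i\<le>k. \<Sum>j\<le>k. (-1::real)^(i+j) / 2 *
      ((if 2 * int i - 2 * int j = 0 then pi else 0) + (if 2 * int i + 2 * int j = 0 then pi else 0)))
      = (\<Sum>i\<le>k. pi/2 + (if i = 0 then pi/2 else 0))"
      by (intro sum.cong refl inner) auto
    also have "\<dots> = (real k + 1) * (pi/2) + pi/2" by (simp add: sum.distrib)
    also have "\<dots> = (real k + 2) * pi / 2" by (simp add: field_simps)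
    finally show ?thesis .
  qed
  ultimately show ?thesis by (simp only: eq)
qed


lemma neg1_even: "X + 2*d = 2*Y \<Longrightarrow> (-1::real)^X = 1"
proof -
  assume h: "X + 2*d = 2*Y"
  have "(-1::real)^(X + 2*d) = (-1)^X" by (simp add: power_add power_mult)
  moreover have "(-1::real)^(2*Y) = 1" by (simp add: power_mult)
  ultimately show ?thesis using h by simp
qed

lemma sgnA:
  assumes "p + 2*d = M+i+j"
  shows "(-1::real)^(M+1) * ((-1)^(i+j) * Acoef p) = Bcoef p"
proof -
  have "(-1::real)^((M+1)+(i+j)+(p+1)) = 1"
    by (rule neg1_even[of _ d "M+i+j+1"]) (use assms in simp)
  then have "(-1::real)^(M+1) * (-1)^(i+j) * (-1)^(p+1) = 1" by (simp add: power_add)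
  then show ?thesis unfolding Acoef_def Bcoef_def by (simp add: field_simps)
qed

lemma Bcoef_lower:
  assumes "1 \<le> p" "p \<le> N"
  shows "Bcoef p \<ge> 1 / (2 * real N ^ 2)"
proof -
  have p1: "real p \<ge> 1" using assms by simp
  have "real p ^ 2 \<ge> 1" using p1 by (simp add: one_le_power)
  then have "4 * real p ^ 2 - 1 > 0" by linarith
  have "real p ^ 2 \<le> real N ^ 2" using assms by (intro power_mono) auto
  then have "4 * real p ^ 2 - 1 \<le> 4 * real N ^ 2" by linarith
  then have "2 / (4 * real N ^ 2) \<le> 2 / (4 * real p ^ 2 - 1)"
    using \<open>4 * real p ^ 2 - 1 > 0\<close> assms by (intro divide_left_mono) auto
  then show ?thesis unfolding Bcoef_def by simp
qed

lemma Bcoef_pos: "1 \<le> p \<Longrightarrow> Bcoef p \<ge> 0"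
proof -
  assume "1 \<le> p"
  then have "real p ^ 2 \<ge> 1" by (simp add: one_le_power)
  then show ?thesis unfolding Bcoef_def by simp
qed

lemma D_lower:
  assumes "2*k < M"
  shows "(-1::real)^(M+1) * (\<Sum>i\<le>k. \<Sum>j\<le>k. (-1)^(i+j) / 4 *
       (Acoef (M+i+j) + Acoef (M+i-j) + Acoef (M-i+j) + Acoef (M-i-j)))
     \<ge> (real k + 1)^2 / (8 * (real (M + 2*k))^2)"
proof -
  have eq: "(-1::real)^(M+1) * (\<Sum>i\<le>k. \<Sum>j\<le>k. (-1)^(i+j) / 4 *
       (Acoef (M+i+j) + Acoef (M+i-j) + Acoef (M-i+j) + Acoef (M-i-j)))
      = (\<Sum>i\<le>k. \<Sum>j\<le>k. (Bcoef (M+i+j) + Bcoef (M+i-j) + Bcoef (M-i+j) + Bcoef (M-i-j)) / 4)"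
    unfolding sum_distrib_left
  proof (intro sum.cong refl)
    fix i j assume "i \<in> {..k}" "j \<in> {..k}"
    then have ij: "i \<le> k" "j \<le> k" by auto
    have s1: "(-1::real)^(M+1) * ((-1)^(i+j) * Acoef (M+i+j)) = Bcoef (M+i+j)"
      by (rule sgnA[of _ 0]) simp
    have s2: "(-1::real)^(M+1) * ((-1)^(i+j) * Acoef (M+i-j)) = Bcoef (M+i-j)"
      by (rule sgnA[of _ j]) (use ij assms in simp)
    have s3: "(-1::real)^(M+1) * ((-1)^(i+j) * Acoef (M-i+j)) = Bcoef (M-i+j)"
      by (rule sgnA[of _ i]) (use ij assms in simp)
    have s4: "(-1::real)^(M+1) * ((-1)^(i+j) * Acoef (M-i-j)) = Bcoef (M-i-j)"
      by (rule sgnA[of _ "i+j"]) (use ij assms in simp)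
    show "(-1::real)^(M+1) * ((-1)^(i+j) / 4 *
       (Acoef (M+i+j) + Acoef (M+i-j) + Acoef (M-i+j) + Acoef (M-i-j)))
      = (Bcoef (M+i+j) + Bcoef (M+i-j) + Bcoef (M-i+j) + Bcoef (M-i-j)) / 4"
      using s1 s2 s3 s4 by (simp add: field_simps)
  qed
  have le: "(\<Sum>i\<le>k. \<Sum>j\<le>k. 1 / (8 * (real (M + 2*k))^2))
      \<le> (\<Sum>i\<le>k. \<Sum>j\<le>k. (Bcoef (M+i+j) + Bcoef (M+i-j) + Bcoef (M-i+j) + Bcoef (M-i-j)) / 4)"
  proof (intro sum_mono)
    fix i j assume "i \<in> {..k}" "j \<in> {..k}"
    then have ij: "i \<le> k" "j \<le> k" by auto
    have "Bcoef (M+i+j) \<ge> 1 / (2 * real (M + 2*k) ^ 2)"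
      by (rule Bcoef_lower) (use ij assms in auto)
    moreover have "Bcoef (M+i-j) \<ge> 0" "Bcoef (M-i+j) \<ge> 0" "Bcoef (M-i-j) \<ge> 0"
      by (rule Bcoef_pos, use ij assms in simp)+
    ultimately show "1 / (8 * (real (M + 2*k))^2) \<le> (Bcoef (M+i+j) + Bcoef (M+i-j) + Bcoef (M-i+j) + Bcoef (M-i-j)) / 4"
      by simp
  qed
  have sumc: "(\<Sum>i\<le>k. \<Sum>j\<le>k. 1 / (8 * (real (M + 2*k))^2)) = (real k + 1)^2 / (8 * (real (M + 2*k))^2)"
    by (simp add: power2_eq_square algebra_simps)
  show ?thesis unfolding eq using le sumc by linarith
qed

lemma sup_lower:
  fixes q :: "real poly"
  assumes "degree q \<le> n"
  shows "sup_err abs q \<ge> 1 / (100 * pi * (real n + 2))"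
proof -
  define k where "k = n"
  define M where "M = 3*n+1"
  define S where "S = sup_err abs q"
  define D where "D = (\<Sum>i\<le>k. \<Sum>j\<le>k. (-1::real)^(i+j) / 4 *
       (Acoef (M+i+j) + Acoef (M+i-j) + Acoef (M-i+j) + Acoef (M-i-j)))"
  have kM: "2*k < M" unfolding k_def M_def by simp
  have dq: "degree q < 2*(M - 2*k)" using assms unfolding k_def M_def by simp
  have eS: "\<bar>\<bar>cos t\<bar> - poly q (cos t)\<bar> \<le> S" for t
    unfolding S_def using sup_err_ge[of "cos t" q] by simp
  have Kb: "\<bar>Kr M k t\<bar> \<le> (Gk k t)^2" for t
  proof -
    have "\<bar>Kr M k t\<bar> = \<bar>cos (real (2*M) * t)\<bar> * (Gk k t)^2" unfolding Kr_def by (simp add: abs_mult)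
    also have "\<dots> \<le> 1 * (Gk k t)^2" by (intro mult_right_mono) auto
    finally show ?thesis by simp
  qed
  have S0: "S \<ge> 0" using eS[of 0] by linarith
  have prod_b: "\<bar>(\<bar>cos t\<bar> - poly q (cos t)) * Kr M k t\<bar> \<le> S * (Gk k t)^2" for t
    unfolding abs_mult using S0 by (intro mult_mono eS Kb) auto
  have IeK: "((\<lambda>t. \<bar>cos t\<bar> * Kr M k t - poly q (cos t) * Kr M k t) has_integral (D - 0)) {0..pi}"
    unfolding D_def by (intro has_integral_diff Kr_abs_int Kr_poly_orth kM dq)
  have IG: "((\<lambda>t. S * (Gk k t)^2) has_integral (S * ((real k + 2) * pi / 2))) {0..pi}"
    by (intro has_integral_mult_right G2_int)
  have IGn: "((\<lambda>t. - (S * (Gk k t)^2)) has_integral - (S * ((real k + 2) * pi / 2))) {0..pi}"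
    by (intro has_integral_neg IG)
  have up: "D - 0 \<le> S * ((real k + 2) * pi / 2)"
  proof (rule has_integral_le[OF IeK IG])
    fix t show "\<bar>cos t\<bar> * Kr M k t - poly q (cos t) * Kr M k t \<le> S * (Gk k t)^2"
      using prod_b[of t] by (simp add: left_diff_distrib abs_le_iff)
  qed
  have lo: "- (S * ((real k + 2) * pi / 2)) \<le> D - 0"
  proof (rule has_integral_le[OF IGn IeK])
    fix t show "- (S * (Gk k t)^2) \<le> \<bar>cos t\<bar> * Kr M k t - poly q (cos t) * Kr M k t"
      using prod_b[of t] by (simp add: left_diff_distrib abs_le_iff)
  qed
  have absD: "\<bar>D\<bar> \<le> S * ((real k + 2) * pi / 2)" using up lo by simp
  have LB: "\<bar>D\<bar> \<ge> (real k + 1)^2 / (8 * (real (M + 2*k))^2)"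
  proof -
    have "(real k + 1)^2 / (8 * (real (M + 2*k))^2) \<le> (-1::real)^(M+1) * D"
      unfolding D_def by (rule D_lower[OF kM])
    also have "\<dots> \<le> \<bar>D\<bar>"
    proof -
      have "\<bar>(-1::real)^(M+1) * D\<bar> = \<bar>D\<bar>" by (simp add: abs_mult)
      then show ?thesis using abs_ge_self[of "(-1::real)^(M+1) * D"] by linarith
    qed
    finally show ?thesis .
  qed
  have MK: "real (M + 2*k) = 5 * real n + 1" unfolding M_def k_def by simp
  have "(real n + 1)^2 / (8 * (5 * real n + 1)^2) \<le> S * ((real n + 2) * pi / 2)"
    using LB absD MK unfolding k_def by simp
  then have h1: "(real n + 1)^2 / (8 * (5 * real n + 1)^2) / ((real n + 2) * pi / 2) \<le> S"
    by (simp add: pos_divide_le_eq ac_simps)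
  have h2: "1 / (100 * pi * (real n + 2)) \<le> (real n + 1)^2 / (8 * (5 * real n + 1)^2) / ((real n + 2) * pi / 2)"
  proof -
    have "(5 * real n + 1)^2 \<le> 25 * (real n + 1)^2" by (simp add: power2_eq_square algebra_simps)
    then have "(real n + 1)^2 / (8 * (5 * real n + 1)^2) \<ge> (real n + 1)^2 / (8 * (25 * (real n + 1)^2))"
      by (intro divide_left_mono mult_pos_pos) auto
    also have "(real n + 1)^2 / (8 * (25 * (real n + 1)^2)) = 1/200" by simp
    finally have "1/200 \<le> (real n + 1)^2 / (8 * (5 * real n + 1)^2)" .
    then have "(1/200) / ((real n + 2) * pi / 2) \<le> (real n + 1)^2 / (8 * (5 * real n + 1)^2) / ((real n + 2) * pi / 2)"
      by (intro divide_right_mono) auto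
    moreover have "(1/200) / ((real n + 2) * pi / 2) = 1 / (100 * pi * (real n + 2))" by (simp add: field_simps)
    ultimately show ?thesis by metis
  qed
  show ?thesis using h1 h2 unfolding S_def by linarith
qed



fun cheb :: "nat \<Rightarrow> real poly" where
  "cheb 0 = 1"
| "cheb (Suc 0) = [:0,1:]"
| "cheb (Suc (Suc k)) = [:0,2:] * cheb (Suc k) - cheb k"

lemma cheb_cos: "poly (cheb k) (cos t) = cos (real k * t)"
proof (induction k rule: cheb.induct)
  case 1 then show ?case by simp
next
  case 2 then show ?case by simp
next
  case (3 k)
  have "2 * cos t * cos (real (Suc k) * t) = cos (t - real (Suc k) * t) + cos (t + real (Suc k) * t)"
    using cos_times_cos[of t "real (Suc k) * t"] by simp
  moreover have "t - real (Suc k) * t = - (real k * t)" by (simp add: algebra_simps)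
  moreover have "t + real (Suc k) * t = real (Suc (Suc k)) * t" by (simp add: algebra_simps)
  ultimately have "cos (real (Suc (Suc k)) * t) = 2 * cos t * cos (real (Suc k) * t) - cos (real k * t)"
    by simp
  then show ?case using 3 by simp
qed

lemma cheb_deg: "degree (cheb k) \<le> k"
proof (induction k rule: cheb.induct)
  case (3 k)
  have "degree ([:0,2:] * cheb (Suc k)) \<le> Suc (Suc k)"
    using degree_mult_le[of "[:0,2:]" "cheb (Suc k)"] 3(1) by simp
  then show ?case unfolding cheb.simps by (rule degree_diff_le) (use 3(2) in simp)
qed auto

lemma cheb_neg: "poly (cheb k) (-x) = (-1)^k * poly (cheb k) x"
  by (induction k rule: cheb.induct) (auto simp: algebra_simps)

lemma cheb_odd_sin:
  assumes "odd m" "-1 \<le> t" "t \<le> 1"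
  shows "\<bar>poly (cheb m) t\<bar> = \<bar>sin (real m * arcsin t)\<bar>"
proof -
  obtain r where m: "m = 2*r+1" using assms(1) oddE by blast
  have "poly (cheb m) t = cos (real m * arccos t)" using cheb_cos[of m "arccos t"] assms by simp
  also have "arccos t = pi/2 - arcsin t" using arcsin_arccos_eq[OF assms(2,3)] by simp
  also have "real m * (pi/2 - arcsin t) = real r * pi + (pi/2 - real m * arcsin t)"
    unfolding m by (simp add: algebra_simps)
  also have "cos (real r * pi + (pi/2 - real m * arcsin t)) = (-1)^r * sin (real m * arcsin t)"
    by (simp add: cos_add cos_diff)
  finally show ?thesis by (simp add: abs_mult)
qed

lemma sin_half_lower:
  fixes x :: real
  assumes "0 \<le> x" "x \<le> 1"
  shows "x/2 \<le> sin x"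
proof -
  have "(\<lambda>x. sin x - x/2) 0 \<le> (\<lambda>x. sin x - x/2) x"
  proof (rule DERIV_nonneg_imp_nondecreasing[OF assms(1)])
    fix y assume y: "0 \<le> y" "y \<le> x"
    have "cos (pi/3) \<le> cos y"
      by (rule cos_monotone_0_pi_le) (use y assms pi_gt3 in auto)
    then have "cos y \<ge> 1/2" by (simp add: cos_60)
    moreover have "DERIV (\<lambda>x. sin x - x/2) y :> cos y - 1/2"
      by (auto intro!: derivative_eq_intros)
    ultimately show "\<exists>d. DERIV (\<lambda>x. sin x - x/2) y :> d \<and> d \<ge> 0" by auto
  qed
  then show ?thesis by simp
qed


definition Sp :: "nat \<Rightarrow> real poly" where "Sp m = cheb m div [:0,1:]"

lemma cheb_odd_zero: "odd m \<Longrightarrow> poly (cheb m) 0 = 0"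
  using cheb_neg[of m 0] by simp

lemma Sp_eq: "odd m \<Longrightarrow> cheb m = [:0,1:] * Sp m"
proof -
  assume "odd m"
  then have "[:- 0,1:] dvd cheb m" using cheb_odd_zero poly_eq_0_iff_dvd by blast
  then have "[:0,1:] dvd cheb m" by simp
  then show ?thesis unfolding Sp_def by (simp only: dvd_mult_div_cancel)
qed

lemma Sp_poly: "odd m \<Longrightarrow> poly (cheb m) x = x * poly (Sp m) x"
  by (subst Sp_eq) auto

lemma Sp_deg: "odd m \<Longrightarrow> degree (Sp m) \<le> m - 1"
proof -
  assume om: "odd m"
  show ?thesis
  proof (cases "Sp m = 0")
    case True then show ?thesis by simp
  next
    case False
    have "degree (cheb m) = degree ([:0,1:] * Sp m)" using Sp_eq[OF om] by simp
    also have "\<dots> = 1 + degree (Sp m)" using False by (subst degree_mult_eq) auto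
    finally show ?thesis using cheb_deg[of m] by simp
  qed
qed

lemma Sp_even: "odd m \<Longrightarrow> poly (Sp m) (-x) = poly (Sp m) x"
proof -
  assume om: "odd m"
  show ?thesis
  proof (cases "x = 0")
    case True then show ?thesis by simp
  next
    case False
    have "(-x) * poly (Sp m) (-x) = - (x * poly (Sp m) x)"
      using cheb_neg[of m x] Sp_poly[OF om, of x] Sp_poly[OF om, of "-x"] om by simp
    then show ?thesis using False by simp
  qed
qed

lemma Sp_upper:
  assumes "odd m" "0 < t" "t \<le> 1"
  shows "\<bar>poly (Sp m) t\<bar> \<le> 1 / t"
proof -
  have "t * \<bar>poly (Sp m) t\<bar> = \<bar>sin (real m * arcsin t)\<bar>"
    using cheb_odd_sin[OF assms(1), of t] Sp_poly[OF assms(1), of t] assms by (simp add: abs_mult)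
  also have "\<dots> \<le> 1" by simp
  finally show ?thesis using assms by (simp add: field_simps)
qed

lemma Sp_lower:
  assumes "odd m" "0 < t" "t \<le> 1 / (4 * real m)"
  shows "\<bar>poly (Sp m) t\<bar> \<ge> real m / 2"
proof -
  have m1: "real m \<ge> 1" using assms(1) by (cases m) auto
  have "1 / (4 * real m) \<le> 1/4" using m1 by (simp add: field_simps)
  then have t4: "t \<le> 1/4" using assms by linarith
  define a where "a = arcsin t"
  have sa: "sin a = t" unfolding a_def using t4 assms by (intro sin_arcsin) auto
  have a0: "a \<ge> 0" unfolding a_def using arcsin_le_arcsin[of 0 t] t4 assms by simp
  have s1: "sin (1::real) \<ge> 1/2" using sin_half_lower[of 1] by simp
  have "a \<le> arcsin (sin 1)" unfolding a_def using t4 s1 assms by (intro arcsin_le_arcsin) auto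
  also have "arcsin (sin 1) = 1" using pi_gt3 by (intro arcsin_sin) auto
  finally have a1: "a \<le> 1" .
  have "a/2 \<le> t" using sin_half_lower[OF a0 a1] sa by simp
  then have a2t: "a \<le> 2*t" by simp
  have ta: "t \<le> a" using sin_x_le_x[OF a0] sa by simp
  have "real m * a \<le> real m * (2*t)" using a2t m1 by (intro mult_left_mono) auto
  also have "\<dots> \<le> real m * (2 * (1 / (4 * real m)))" using assms m1 by (intro mult_left_mono) auto
  also have "\<dots> = 1/2" using m1 by simp
  finally have ma1: "real m * a \<le> 1" by simp
  have ma0: "real m * a \<ge> 0" using a0 by simp
  have "real m * t / 2 \<le> real m * a / 2" using ta m1 by (intro divide_right_mono mult_left_mono) auto
  also have "\<dots> \<le> sin (real m * a)" using sin_half_lower[OF ma0 ma1] by simp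
  finally have lo: "real m * t / 2 \<le> \<bar>sin (real m * a)\<bar>" by simp
  have "t * \<bar>poly (Sp m) t\<bar> = \<bar>sin (real m * a)\<bar>"
    unfolding a_def using cheb_odd_sin[OF assms(1), of t] Sp_poly[OF assms(1), of t] assms t4
    by (simp add: abs_mult)
  then have "t * (real m / 2) \<le> t * \<bar>poly (Sp m) t\<bar>" using lo by (simp add: field_simps)
  then show ?thesis using assms(2) by simp
qed


definition antider :: "real poly \<Rightarrow> real poly" where
  "antider p = (\<Sum>i\<le>degree p. monom (coeff p i / real (Suc i)) (Suc i))"

lemma antider_poly: "poly (antider p) x = (\<Sum>i\<le>degree p. coeff p i / real (Suc i) * x ^ Suc i)"
  by (simp add: antider_def poly_sum poly_monom)

lemma antider_deriv: "(poly (antider p) has_real_derivative poly p x) (at x)"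
proof -
  have "((\<lambda>x. \<Sum>i\<le>degree p. coeff p i / real (Suc i) * x ^ Suc i) has_real_derivative
        (\<Sum>i\<le>degree p. coeff p i / real (Suc i) * (real (Suc i) * x ^ i))) (at x)"
    by (intro DERIV_sum DERIV_cmult) (use DERIV_pow[of "Suc _" x] in auto)
  moreover have "(\<Sum>i\<le>degree p. coeff p i / real (Suc i) * (real (Suc i) * x ^ i)) = poly p x"
    by (simp add: poly_altdef)
  ultimately show ?thesis unfolding antider_poly[abs_def] by simp
qed

lemma antider_deg: "degree (antider p) \<le> degree p + 1"
  unfolding antider_def
  by (intro degree_sum_le) (auto intro: order.trans[OF degree_monom_le])

lemma antider_0: "poly (antider p) 0 = 0"
  by (simp add: antider_poly)


lemma inv5_deriv: "y \<noteq> 0 \<Longrightarrow> ((\<lambda>y. 1 / (5 * y^5)) has_real_derivative (- 1 / y^6)) (at y)"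
  by (auto intro!: derivative_eq_intros simp: field_simps power_eq_if)

lemma inv3_deriv: "y \<noteq> 0 \<Longrightarrow> ((\<lambda>y. - 1 / (3 * y^3)) has_real_derivative (1 / y^4)) (at y)"
  by (auto intro!: derivative_eq_intros simp: field_simps power_eq_if)

lemma L1_upper_m:
  assumes om: "odd m"
  shows "\<exists>q. degree q \<le> 6*m - 4 \<and> L1_err abs q \<le> 72 / (real m)^2"
proof -
  have m1n: "m \<ge> 1" using om by (cases m) auto
  then have m1: "real m \<ge> 1" by simp
  define S where "S = Sp m"
  define Kp where "Kp = S ^ 6"
  define P where "P = antider Kp"
  define K where "K x = poly S x ^ 6" for x
  have PK: "(poly P has_real_derivative K x) (at x)" for x
    using antider_deriv[of Kp x] unfolding P_def Kp_def K_def by simp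
  have K0: "K x \<ge> 0" for x unfolding K_def by (simp add: zero_le_even_power)
  have Kabs: "K x = \<bar>poly S x\<bar> ^ 6" for x unfolding K_def by (simp add: power_even_abs)
  have Keven: "K (-x) = K x" for x unfolding K_def S_def using Sp_even[OF om] by simp
  have Pmono: "poly P x \<le> poly P y" if "x \<le> y" for x y
    by (rule DERIV_nonneg_imp_nondecreasing[OF that]) (use PK K0 in blast)
  have P0: "poly P 0 = 0" unfolding P_def by (rule antider_0)
  have Podd: "poly P (-x) = - poly P x" for x
  proof -
    have d: "DERIV (\<lambda>y. poly P y + poly P (-y)) y :> 0" for y
    proof -
      have "DERIV (\<lambda>y. poly P (-y)) y :> K (-y) * (-1)"
        by (rule DERIV_chain2[OF PK]) (auto intro!: derivative_eq_intros)
      then have "DERIV (\<lambda>y. poly P y + poly P (-y)) y :> K y + K (-y) * (-1)"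
        by (intro DERIV_add PK)
      then show ?thesis using Keven[of y] by simp
    qed
    have "poly P x + poly P (-x) = poly P 0 + poly P (-0)"
      by (rule DERIV_isconst_all) (use d in blast)
    then show ?thesis using P0 by simp
  qed
  define c where "c = 1 / (4 * real m)"
  have c0: "c > 0" unfolding c_def using m1 by simp
  have c1: "c \<le> 1" unfolding c_def using m1 by (simp add: field_simps)
  define I where "I = poly P 1"
  have Ilow: "I \<ge> real m ^ 5 / 512"
  proof -
    have "(\<lambda>y. poly P y - (real m / 2)^6 * y) (c/2) \<le> (\<lambda>y. poly P y - (real m / 2)^6 * y) c"
    proof (rule DERIV_nonneg_imp_nondecreasing[of "c/2" c "\<lambda>y. poly P y - (real m / 2)^6 * y"])
      show "c/2 \<le> c" using c0 by simp
    next
      fix y assume y: "c/2 \<le> y" "y \<le> c"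
      have y0: "y > 0" using y c0 by simp
      have "real m / 2 \<le> \<bar>poly S y\<bar>" unfolding S_def
        by (rule Sp_lower[OF om]) (use y y0 in \<open>auto simp: c_def\<close>)
      then have "(real m / 2)^6 \<le> K y" unfolding Kabs using m1 by (intro power_mono) auto
      moreover have "DERIV (\<lambda>y. poly P y - (real m / 2)^6 * y) y :> K y - (real m / 2)^6"
        using DERIV_diff[OF PK[of y] DERIV_cmult[OF DERIV_ident, of "(real m/2)^6"]] by simp
      ultimately show "\<exists>d. DERIV (\<lambda>y. poly P y - (real m / 2)^6 * y) y :> d \<and> d \<ge> 0" by auto
    qed
    then have "poly P c - poly P (c/2) \<ge> (real m / 2)^6 * (c/2)" by (simp add: algebra_simps)
    moreover have "poly P (c/2) \<ge> 0" using Pmono[of 0 "c/2"] P0 c0 by simp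
    moreover have "poly P 1 \<ge> poly P c" using Pmono c1 by simp
    moreover have "(real m / 2)^6 * (c/2) = real m ^ 5 / 512"
      unfolding c_def using m1 by (simp add: field_simps power_eq_if)
    ultimately show ?thesis unfolding I_def by linarith
  qed
  have Ipos: "I > 0" using Ilow m1 by (smt (verit) divide_pos_pos zero_less_power)
  have tail: "I - poly P x \<le> 1 / (5 * x^5)" if x: "0 < x" "x \<le> 1" for x
  proof -
    have "(\<lambda>y. poly P y + 1 / (5 * y^5)) 1 \<le> (\<lambda>y. poly P y + 1 / (5 * y^5)) x"
    proof (rule DERIV_nonpos_imp_nonincreasing[of x 1 "\<lambda>y. poly P y + 1 / (5 * y^5)", OF x(2)])
      fix y assume y: "x \<le> y" "y \<le> 1"
      then have y0: "y > 0" using x by simp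
      have "\<bar>poly S y\<bar> \<le> 1 / y" unfolding S_def by (rule Sp_upper[OF om]) (use y y0 in auto)
      then have "K y \<le> (1/y)^6" unfolding Kabs by (intro power_mono) auto
      then have "K y - 1 / y^6 \<le> 0" by (simp add: power_divide)
      moreover have "DERIV (\<lambda>y. poly P y + 1 / (5 * y^5)) y :> K y + (- 1 / y^6)"
        by (intro DERIV_add PK inv5_deriv) (use y0 in simp)
      ultimately show "\<exists>d. DERIV (\<lambda>y. poly P y + 1 / (5 * y^5)) y :> d \<and> d \<le> 0" by auto
    qed
    then have "I + 1/5 \<le> poly P x + 1 / (5 * x^5)" unfolding I_def by simp
    then show ?thesis by linarith
  qed
  define q where "q = smult (1/I) ([:0,1:] * P)"
  have qpoly: "poly q x = x * poly P x / I" for x unfolding q_def by simp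
  have degS: "degree S \<le> m - 1" unfolding S_def by (rule Sp_deg[OF om])
  have "degree Kp \<le> (m - 1) * 6" unfolding Kp_def
    using degree_power_le[of S 6] degS by (meson le_trans mult_le_mono1)
  then have degP: "degree P \<le> (m - 1) * 6 + 1" unfolding P_def using antider_deg[of Kp] by simp
  have "degree q \<le> degree ([:0,1:] * P)" unfolding q_def by simp
  also have "\<dots> \<le> 1 + degree P" using degree_mult_le[of "[:0,1:]" P] by simp
  finally have degq: "degree q \<le> 6*m - 4" using degP m1n by simp
  define e where "e x = x * (I - poly P x) / I" for x
  have PI: "poly P x \<le> I" if "x \<le> 1" for x unfolding I_def using Pmono that by simp
  have Pnn: "poly P x \<ge> 0" if "x \<ge> 0" for x using Pmono[OF that] P0 by simp
  have e0: "e x \<ge> 0" if "0 \<le> x" "x \<le> 1" for x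
    unfolding e_def using PI[OF that(2)] Ipos that by simp
  have err: "\<bar>abs x - poly q x\<bar> = e \<bar>x\<bar>" if "x \<in> {-1..1}" for x
  proof (cases "x \<ge> 0")
    case True
    have "abs x - poly q x = e x" unfolding e_def qpoly using True Ipos by (simp add: field_simps)
    then show ?thesis using e0[of x] True that by simp
  next
    case False
    have "abs x - poly q x = e (-x)" unfolding e_def qpoly using False Ipos Podd[of x]
      by (simp add: field_simps)
    then show ?thesis using e0[of "-x"] False that by simp
  qed
  have e_le: "e x \<le> x" if "0 \<le> x" "x \<le> 1" for x
  proof -
    have "I - poly P x \<le> I" using Pnn[OF that(1)] by simp
    then have "x * (I - poly P x) \<le> x * I" using that by (intro mult_left_mono) auto
    then show ?thesis unfolding e_def using Ipos by (simp add: divide_le_eq)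
  qed
  have e_tail: "e x \<le> 512 / (5 * real m ^ 5) * (1 / x^4)" if "0 < x" "x \<le> 1" for x
  proof -
    have "x * (I - poly P x) \<le> x * (1 / (5 * x^5))" using tail[OF that] that by (intro mult_left_mono) auto
    also have "\<dots> = 1 / (5 * x^4)" using that by (simp add: field_simps power_eq_if)
    finally have "x * (I - poly P x) / I \<le> 1 / (5 * x^4) / I" using Ipos by (intro divide_right_mono) auto
    then have "e x \<le> 1 / (5 * x^4) / I" unfolding e_def .
    also have "\<dots> \<le> 1 / (5 * x^4) / (real m ^ 5 / 512)"
      using Ilow m1 that Ipos by (intro divide_left_mono) auto
    also have "\<dots> = 512 / (5 * real m ^ 5) * (1 / x^4)" by (simp add: field_simps)
    finally show ?thesis .
  qed
  have econt: "continuous_on A e" for A unfolding e_def by (intro continuous_intros) (use Ipos in auto)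
  define b where "b = 1 / real m"
  have b0: "b > 0" and b1: "b \<le> 1" unfolding b_def using m1 by auto
  have i1: "integral {0..b} e \<le> b^2/2"
  proof -
    have hx: "((\<lambda>x. x) has_integral (b^2/2 - 0^2/2)) {0..b}"
      by (rule ftc_real) (use b0 in \<open>auto intro!: derivative_eq_intros\<close>)
    have "integral {0..b} e \<le> integral {0..b} (\<lambda>x. x)"
      by (rule integral_le) (use e_le b1 hx in \<open>auto intro: integrable_continuous_interval econt\<close>)
    then show ?thesis using hx by (simp add: integral_unique)
  qed
  have i2: "integral {b..1} e \<le> 512 / (15 * (real m)^2)"
  proof -
    define C where "C = 512 / (5 * real m ^ 5)"
    have hx: "((\<lambda>x. C * (1 / x^4)) has_integral (C * ((- 1 / (3 * 1^3)) - (- 1 / (3 * b^3))))) {b..1}"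
      by (intro has_integral_mult_right ftc_real[OF b1] inv3_deriv) (use b0 in auto)
    have "integral {b..1} e \<le> integral {b..1} (\<lambda>x. C * (1 / x^4))"
      by (rule integral_le) (use e_tail b0 hx in \<open>auto intro: integrable_continuous_interval econt simp: C_def\<close>)
    also have "\<dots> = C * (1 / (3 * b^3) - 1/3)" using hx by (simp add: integral_unique)
    also have "\<dots> \<le> C * (1 / (3 * b^3))" unfolding C_def by (intro mult_left_mono) auto
    also have "\<dots> = 512 / (15 * (real m)^2)" unfolding C_def b_def using m1 by (simp add: field_simps power_eq_if)
    finally show ?thesis .
  qed
  have eint: "e integrable_on {0..1}" by (intro integrable_continuous_interval econt)
  have isum: "integral {0..1} e = integral {0..b} e + integral {b..1} e"
    using Henstock_Kurzweil_Integration.integral_combine[OF _ b1 eint] b0 by simp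
  define J where "J = integral {0..1} e"
  have eJ: "(e has_integral J) {0..1}" unfolding J_def using eint by (simp add: integrable_integral)
  have eJ': "((\<lambda>x. e (-x)) has_integral J) {-1..0}"
    using has_integral_reflect_real[where f=e and i=J and a=0 and b=1] eJ by simp
  have A1: "((\<lambda>x. \<bar>abs x - poly q x\<bar>) has_integral J) {0..1}"
  proof (rule has_integral_cong[THEN iffD2, OF _ eJ])
    fix x :: real assume "x \<in> {0..1}"
    then show "\<bar>abs x - poly q x\<bar> = e x" using err[of x] by simp
  qed
  have A2: "((\<lambda>x. \<bar>abs x - poly q x\<bar>) has_integral J) {-1..0}"
  proof (rule has_integral_cong[THEN iffD2, OF _ eJ'])
    fix x :: real assume "x \<in> {-1..0}"
    then show "\<bar>abs x - poly q x\<bar> = e (-x)" using err[of x] by simp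
  qed
  have "((\<lambda>x. \<bar>abs x - poly q x\<bar>) has_integral (J + J)) {-1..1}"
    by (rule has_integral_combine[OF _ _ A2 A1]) auto
  then have L1: "L1_err abs q = 2 * J" unfolding L1_err_def by (simp add: integral_unique)
  have "J \<le> b^2/2 + 512 / (15 * (real m)^2)" unfolding J_def using isum i1 i2 by linarith
  also have "b^2/2 = 1 / (2 * (real m)^2)" unfolding b_def by (simp add: power_divide)
  finally have "2 * J \<le> 2 * (1 / (2 * (real m)^2) + 512 / (15 * (real m)^2))" by simp
  also have "\<dots> \<le> 72 / (real m)^2" using m1 by (simp add: field_simps)
  finally show ?thesis using L1 degq by auto
qed



lemma markov_h:
  fixes g :: "real \<Rightarrow> real"
  assumes gc: "continuous_on {-1..1} g" and g0: "\<And>x. x \<in> {-1..1} \<Longrightarrow> g x \<ge> 0" and c0: "c > 0"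
  shows "measure lborel {x \<in> {-1..1}. g x \<ge> c} \<le> integral {-1..1} g / c"
proof -
  define A where "A = {x \<in> {-1..1::real}. g x \<ge> c}"
  have Aeq: "A = {-1..1} \<inter> g -` {c..}" unfolding A_def by auto
  have clA: "closed A" unfolding Aeq by (intro continuous_closed_preimage gc) auto
  have bA: "bounded A" unfolding A_def by (rule bounded_subset[of "{-1..1}"]) auto
  have cA: "compact A" using clA bA by (simp add: compact_eq_bounded_closed)
  have Aleb: "A \<in> lmeasurable" by (rule lmeasurable_compact[OF cA])
  have Abor: "A \<in> sets lborel" using borel_closed[OF clA] by simp
  have mA: "measure lborel A = integral A (\<lambda>x. 1)"
    using measure_completion[OF Abor] lmeasure_integral[OF Aleb] by simp
  have AI: "A \<inter> {-1..1} = A" unfolding A_def by auto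
  have int1: "(\<lambda>x. if x \<in> A then c else 0) integrable_on {-1..1}"
    unfolding integrable_restrict_Int AI by (rule integrable_on_const[OF Aleb])
  have int2: "g integrable_on {-1..1}" by (rule integrable_continuous_interval[OF gc])
  have "integral {-1..1} (\<lambda>x. if x \<in> A then c else 0) \<le> integral {-1..1} g"
    by (rule integral_le[OF int1 int2]) (use g0 in \<open>auto simp: A_def\<close>)
  moreover have "integral {-1..1} (\<lambda>x. if x \<in> A then c else 0) = c * measure lborel A"
  proof -
    have "integral {-1..1} (\<lambda>x. if x \<in> A then c else 0) = integral A (\<lambda>x. c *\<^sub>R 1)"
      unfolding integral_restrict_Int AI by simp
    also have "\<dots> = c * integral A (\<lambda>x. 1)" by (simp only: integral_cmul) simp
    finally show ?thesis using mA by simp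
  qed
  ultimately have "c * measure lborel A \<le> integral {-1..1} g" by simp
  then show ?thesis unfolding A_def using c0 by (simp add: field_simps)
qed

theorem mainTheorem7:
  fixes P1 Pinf :: "nat \<Rightarrow> real poly"
  assumes "\<And>n. is_best_L1 abs n (P1 n)"
      and "\<And>n. is_best_Linf abs n (Pinf n)"
  shows "(\<lambda>n. measure lborel {x \<in> {-1..1::real}. \<bar>\<bar>x\<bar> - poly (P1 n) x\<bar> \<ge> sup_err abs (Pinf n) / 2})
           \<in> O(\<lambda>n. 1 / real n)"
proof (rule bigoI[where c = "2880000 * pi"])
  show "\<forall>\<^sub>F n in at_top. norm (measure lborel {x \<in> {-1..1::real}. \<bar>\<bar>x\<bar> - poly (P1 n) x\<bar> \<ge> sup_err abs (Pinf n) / 2})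
     \<le> 2880000 * pi * norm (1 / real n)"
    unfolding eventually_at_top_linorder
  proof (intro exI[of _ 20] allI impI)
    fix n :: nat assume n20: "n \<ge> 20"
    have rn: "real n \<ge> 20" using n20 by simp
    define S where "S = sup_err abs (Pinf n)"
    define L where "L = L1_err abs (P1 n)"
    have degI: "degree (Pinf n) \<le> n" using assms(2)[of n] unfolding is_best_Linf_def by simp
    have Slow: "S \<ge> 1 / (100 * pi * (real n + 2))" unfolding S_def by (rule sup_lower[OF degI])
    have Spos: "S > 0" using Slow by (smt (verit) divide_pos_pos pi_gt_zero mult_pos_pos rn)
    define r where "r = (n - 2) div 12"
    define m where "m = 2*r+1"
    have om: "odd m" unfolding m_def by simp
    obtain q where q: "degree q \<le> 6*m - 4" "L1_err abs q \<le> 72 / (real m)^2"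
      using L1_upper_m[OF om] by blast
    have dm: "r * 12 + (n-2) mod 12 = n - 2" unfolding r_def by (rule div_mult_mod_eq)
    have mlt: "(n-2) mod 12 < 12" by simp
    have "6*m - 4 = 12 * r + 2" unfolding m_def by simp
    then have "6*m - 4 \<le> n" using dm n20 by linarith
    then have "degree q \<le> n" using q(1) by simp
    then have "L \<le> L1_err abs q" unfolding L_def using assms(1)[of n] unfolding is_best_L1_def by simp
    also have "\<dots> \<le> 72 / (real m)^2" by (rule q(2))
    also have "\<dots> \<le> 7200 / (real n)^2"
    proof -
      have "12 * r + 13 \<ge> n" using dm mlt n20 by linarith
      then have "10 * real m \<ge> real n" unfolding m_def using n20 by simp
      then have mn: "real n / 10 \<le> real m" by simp
      have "(real n / 10)^2 \<le> (real m)^2" using mn rn by (intro power_mono) auto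
      then have "72 / (real m)^2 \<le> 72 / (real n / 10)^2" using rn by (intro divide_left_mono) auto
      also have "\<dots> = 7200 / (real n)^2" by (simp add: power_divide)
      finally show ?thesis .
    qed
    finally have Lb: "L \<le> 7200 / (real n)^2" .
    have cont: "continuous_on {-1..1} (\<lambda>x::real. \<bar>\<bar>x\<bar> - poly (P1 n) x\<bar>)" by (intro continuous_intros)
    have "measure lborel {x \<in> {-1..1::real}. \<bar>\<bar>x\<bar> - poly (P1 n) x\<bar> \<ge> S / 2} \<le> L / (S / 2)"
      unfolding L_def L1_err_def by (rule markov_h[OF cont]) (use Spos in auto)
    also have "\<dots> = 2 * L / S" by simp
    also have "\<dots> \<le> 2 * (7200 / (real n)^2) / S" using Lb Spos by (intro divide_right_mono) auto
    also have "\<dots> \<le> 2 * (7200 / (real n)^2) / (1 / (100 * pi * (real n + 2)))"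
      using Slow rn Spos by (intro divide_left_mono) (auto intro!: divide_pos_pos)
    also have "\<dots> = 1440000 * pi * (real n + 2) / (real n)^2" by (simp add: field_simps)
    also have "\<dots> \<le> 1440000 * pi * (2 * real n) / (real n)^2"
      using rn by (intro divide_right_mono mult_left_mono) auto
    also have "\<dots> = 2880000 * pi * (1 / real n)" using rn by (simp add: field_simps power2_eq_square)
    finally have fin: "measure lborel {x \<in> {-1..1::real}. \<bar>\<bar>x\<bar> - poly (P1 n) x\<bar> \<ge> S / 2} \<le> 2880000 * pi * (1 / real n)" .
    show "norm (measure lborel {x \<in> {-1..1::real}. \<bar>\<bar>x\<bar> - poly (P1 n) x\<bar> \<ge> sup_err abs (Pinf n) / 2})
     \<le> 2880000 * pi * norm (1 / real n)"
      using fin rn unfolding S_def by simp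
  qed
qed

end
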